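(* Let $G=(V,E)$ be a finite graph. (i) For every $z>0$ the fixed point equation $\mathbf{X}=z\mathcal{R}_G(\mathbf{X})$ on $[0,\infty)^{\vec E}$ has a unique solution $\mathbf{Y}(z)\in(0,\infty)^{\vec E}$, and it is attractive: the iterates $\mathbf{X}^0=0$, $\mathbf{X}^{t+1}=z\mathcal{R}_G(\mathbf{X}^t)$ converge to $\mathbf{Y}(z)$. (ii) The map $z\mapsto\mathbf{Y}(z)$ is non-decreasing and $z\mapsto\mathbf{Y}(z)/z$ is non-increasing on $(0,\infty)$ (componentwise). (iii) If moreover $G$ is a tree, then for every $e\in E$ and either orientation $\vec e$ of $e$, $$\mu^z_G(B_e=1)=\frac{Y_{\vec e}(z)\mathcal{R}_{-\vec e}(\mathbf{Y}(z))}{1+Y_{\vec e}(z)\mathcal{R}_{-\vec e}(\mathbf{Y}(z))}.$$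
   Context: $\vec E$: directed edges of $G$ ($u\to v$, $v\to u$ per edge $uv$), $-\vec e$ the reverse of $\vec e$; $\partial u$: neighbours of $u$; empty sums are $0$. $\mathcal{R}_G:[0,\infty)^{\vec E}\to[0,1]^{\vec E}$ is defined by $\mathcal{R}_G(\mathbf{X})_{u\to v}=\mathcal{R}_{u\to v}(\mathbf{X})=1/(1+\sum_{w\in\partial u\setminus v}X_{w\to u})$, and $z\mathcal{R}_G$ multiplies each component by $z$. Comparisons of vectors are componentwise. The Gibbs measure on matchings ($\mathbf{B}\in\{0,1\}^E$ with at most one edge of $\mathbf{B}$ at each vertex) is $\mu^z_G(\mathbf{B})=z^{\sum_eB_e}/P_G(z)$, $P_G(z)$ the normalising constant. *)

theory Defs
  imports "HOL-Analysis.Analysis"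
begin

text \<open>A finite simple graph: vertex set V, directed edge set D (both orientations of
every undirected edge), symmetric and irreflexive.\<close>
definition finite_graph :: "'a set \<Rightarrow> ('a \<times> 'a) set \<Rightarrow> bool" where
  "finite_graph V D \<longleftrightarrow> finite V \<and> D \<subseteq> V \<times> V \<and> sym D \<and> (\<forall>u. (u, u) \<notin> D)"

definition nbrs :: "('a \<times> 'a) set \<Rightarrow> 'a \<Rightarrow> 'a set" where
  "nbrs D u = {w. (w, u) \<in> D}"

definition uedges :: "('a \<times> 'a) set \<Rightarrow> 'a set set" where
  "uedges D = {{u, v} | u v. (u, v) \<in> D}"

definition RG :: "('a \<times> 'a) set \<Rightarrow> ('a \<times> 'a \<Rightarrow> real) \<Rightarrow> 'a \<times> 'a \<Rightarrow> real" where
  "RG D X e = 1 / (1 + (\<Sum>w \<in> nbrs D (fst e) - {snd e}. X (w, fst e)))"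

primrec RG_iter :: "('a \<times> 'a) set \<Rightarrow> real \<Rightarrow> nat \<Rightarrow> 'a \<times> 'a \<Rightarrow> real" where
  "RG_iter D z 0 = (\<lambda>_. 0)"
| "RG_iter D z (Suc t) = (\<lambda>e. z * RG D (RG_iter D z t) e)"

definition matchings :: "('a \<times> 'a) set \<Rightarrow> 'a set set set" where
  "matchings D = {M. M \<subseteq> uedges D \<and> (\<forall>v. card {e \<in> M. v \<in> e} \<le> 1)}"

definition partition_fn :: "('a \<times> 'a) set \<Rightarrow> real \<Rightarrow> real" where
  "partition_fn D z = (\<Sum>M \<in> matchings D. z ^ card M)"

definition gibbs_edge_prob :: "('a \<times> 'a) set \<Rightarrow> real \<Rightarrow> 'a set \<Rightarrow> real" where
  "gibbs_edge_prob D z e =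
     (\<Sum>M \<in> {M \<in> matchings D. e \<in> M}. z ^ card M) / partition_fn D z"

definition connected_graph :: "'a set \<Rightarrow> ('a \<times> 'a) set \<Rightarrow> bool" where
  "connected_graph V D \<longleftrightarrow> (\<forall>u \<in> V. \<forall>v \<in> V. (u, v) \<in> D\<^sup>*)"

definition is_cycle :: "('a \<times> 'a) set \<Rightarrow> 'a list \<Rightarrow> bool" where
  "is_cycle D cs \<longleftrightarrow> length cs \<ge> 3 \<and> distinct cs
      \<and> (\<forall>i < length cs - 1. (cs ! i, cs ! Suc i) \<in> D)
      \<and> (last cs, hd cs) \<in> D"

definition is_tree :: "'a set \<Rightarrow> ('a \<times> 'a) set \<Rightarrow> bool" where
  "is_tree V D \<longleftrightarrow> V \<noteq> {} \<and> connected_graph V D \<and> (\<nexists>cs. is_cycle D cs)"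

end

theory Submission
  imports Defs "HOL-Library.Transitive_Closure_Table"
begin



lemma RG_cong: "(\<And>d. d \<in> D \<Longrightarrow> X d = X' d) \<Longrightarrow> RG D X e = RG D X' e"
  unfolding RG_def nbrs_def by (intro arg_cong[where f="\<lambda>s. 1/(1+s)"] sum.cong) auto

lemma RG_sum_nonneg: fixes X :: "'a \<times> 'a \<Rightarrow> real" assumes "\<And>d. d \<in> D \<Longrightarrow> 0 \<le> X d" shows "0 \<le> (\<Sum>w \<in> nbrs D (fst e) - {snd e}. X (w, fst e))"
  using assms unfolding nbrs_def by (intro sum_nonneg) auto

lemma RG_pos: "(\<And>d. d \<in> D \<Longrightarrow> 0 \<le> X d) \<Longrightarrow> 0 < RG D X e"
  using RG_sum_nonneg[of D X e] unfolding RG_def by simp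

lemma RG_le1: "(\<And>d. d \<in> D \<Longrightarrow> 0 \<le> X d) \<Longrightarrow> RG D X e \<le> 1"
  using RG_sum_nonneg[of D X e] unfolding RG_def by simp

lemma RG_anti:
  assumes "\<And>d. d \<in> D \<Longrightarrow> 0 \<le> X d \<and> X d \<le> X' d"
  shows "RG D X' e \<le> RG D X e"
proof -
  have a: "(\<Sum>w \<in> nbrs D (fst e) - {snd e}. X (w, fst e)) \<le> (\<Sum>w \<in> nbrs D (fst e) - {snd e}. X' (w, fst e))"
    using assms unfolding nbrs_def by (intro sum_mono) auto
  have b: "0 \<le> (\<Sum>w \<in> nbrs D (fst e) - {snd e}. X (w, fst e))"
    using assms by (intro RG_sum_nonneg) auto
  show ?thesis unfolding RG_def using a b by (simp add: frac_le)
qed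

lemma RG_K:
  assumes c: "c > 1" and h: "\<And>d. d \<in> D \<Longrightarrow> 0 \<le> Y d \<and> 0 \<le> X d \<and> X d \<le> c * Y d"
  shows "RG D Y e < c * RG D X e"
proof -
  define sx where "sx = (\<Sum>w \<in> nbrs D (fst e) - {snd e}. X (w, fst e))"
  define sy where "sy = (\<Sum>w \<in> nbrs D (fst e) - {snd e}. Y (w, fst e))"
  have "sx \<le> (\<Sum>w \<in> nbrs D (fst e) - {snd e}. c * Y (w, fst e))"
    unfolding sx_def using h unfolding nbrs_def by (intro sum_mono) auto
  also have "\<dots> = c * sy" unfolding sy_def by (simp add: sum_distrib_left)
  finally have 1: "sx \<le> c * sy" .
  have 2: "0 \<le> sy" unfolding sy_def using h by (intro RG_sum_nonneg) auto
  have 3: "0 \<le> sx" unfolding sx_def using h by (intro RG_sum_nonneg) auto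
  have "1 + sx < c * (1 + sy)" using 1 c by (simp add: algebra_simps)
  hence "1 / (1 + sy) < c / (1 + sx)" using 2 3 c by (simp add: divide_simps)
  thus ?thesis unfolding RG_def sx_def[symmetric] sy_def[symmetric] by simp
qed

lemma ratio_lemma:
  fixes A B :: "'b \<Rightarrow> real"
  assumes fin: "finite D" and rho: "\<rho> \<ge> 1" and pos: "\<And>e. e \<in> D \<Longrightarrow> A e > 0 \<and> B e > 0"
    and H: "\<And>c. c > 1 \<Longrightarrow> (\<forall>d\<in>D. A d \<le> c * B d \<and> B d \<le> c * \<rho> * A d) \<Longrightarrow>
              (\<forall>e\<in>D. A e < c * B e \<and> B e < c * \<rho> * A e)"
  shows "\<forall>e\<in>D. A e \<le> B e \<and> B e \<le> \<rho> * A e"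
proof (cases "D = {}")
  case True then show ?thesis by simp
next
  case False
  define r where "r e = max (A e / B e) (B e / (\<rho> * A e))" for e
  define c where "c = Max (r ` D)"
  have rc: "r d \<le> c" if "d \<in> D" for d unfolding c_def using fin that by simp
  have bd: "A d \<le> c * B d \<and> B d \<le> c * \<rho> * A d" if "d \<in> D" for d
  proof -
    have p: "A d > 0" "B d > 0" "\<rho> * A d > 0" using pos[OF that] rho by auto
    have "A d / B d \<le> c" "B d / (\<rho> * A d) \<le> c" using rc[OF that] unfolding r_def by auto
    thus ?thesis using p by (simp add: divide_simps mult.assoc)
  qed
  show ?thesis
  proof (cases "c \<le> 1")
    case True
    show ?thesis
    proof
      fix e assume e: "e \<in> D"
      have p: "A e > 0" "B e > 0" "\<rho> * A e > 0" using pos[OF e] rho by auto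
      have "A e / B e \<le> 1" "B e / (\<rho> * A e) \<le> 1" using rc[OF e] True unfolding r_def by auto
      thus "A e \<le> B e \<and> B e \<le> \<rho> * A e" using p by (simp add: divide_simps)
    qed
  next
    case False
    hence c1: "c > 1" by simp
    have st: "\<forall>e\<in>D. A e < c * B e \<and> B e < c * \<rho> * A e" using H[OF c1] bd by blast
    have "c \<in> r ` D" unfolding c_def using fin \<open>D \<noteq> {}\<close> by simp
    then obtain e where e: "e \<in> D" "c = r e" by auto
    have p: "A e > 0" "B e > 0" "\<rho> * A e > 0" using pos[OF e(1)] rho by auto
    have "A e / B e < c" "B e / (\<rho> * A e) < c" using st e(1) p by (auto simp: divide_simps mult.assoc)
    hence "r e < c" unfolding r_def by simp
    with e show ?thesis by simp
  qed
qed




lemma fp_pos: "z > 0 \<Longrightarrow> (\<forall>e\<in>D. 0 \<le> X e) \<Longrightarrow> (\<forall>e\<in>D. X e = z * RG D X e) \<Longrightarrow> e \<in> D \<Longrightarrow> X e > 0"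
  using RG_pos[of D X e] by auto

lemma fp_unique:
  fixes X X' :: "'a \<times> 'a \<Rightarrow> real"
  assumes fin: "finite D" and z: "z > 0"
    and X: "\<forall>e\<in>D. 0 \<le> X e" "\<forall>e\<in>D. X e = z * RG D X e"
    and X': "\<forall>e\<in>D. 0 \<le> X' e" "\<forall>e\<in>D. X' e = z * RG D X' e"
  shows "\<forall>e\<in>D. X e = X' e"
proof -
  have "\<forall>e\<in>D. X e \<le> X' e \<and> X' e \<le> 1 * X e"
  proof (rule ratio_lemma[OF fin order_refl])
    show "\<And>e. e \<in> D \<Longrightarrow> 0 < X e \<and> 0 < X' e" using fp_pos[OF z] X X' by blast
  next
    fix c :: real assume c: "c > 1" and h: "\<forall>d\<in>D. X d \<le> c * X' d \<and> X' d \<le> c * 1 * X d"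
    show "\<forall>e\<in>D. X e < c * X' e \<and> X' e < c * 1 * X e"
    proof
      fix e assume e: "e \<in> D"
      have 1: "RG D X e < c * RG D X' e" by (rule RG_K[OF c]) (use h X X' in auto)
      have 2: "RG D X' e < c * RG D X e" by (rule RG_K[OF c]) (use h X X' in auto)
      show "X e < c * X' e \<and> X' e < c * 1 * X e"
        using 1 2 z X(2) X'(2) e by (simp add: mult.left_commute)
    qed
  qed
  thus ?thesis by force
qed

lemma iter_bounds: "z > 0 \<Longrightarrow> 0 \<le> RG_iter D z t e \<and> RG_iter D z t e \<le> z"
proof (induction t arbitrary: e)
  case 0 then show ?case by simp
next
  case (Suc t)
  have "0 < RG D (RG_iter D z t) e" "RG D (RG_iter D z t) e \<le> 1"
    using Suc by (auto intro!: RG_pos RG_le1)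
  then show ?case using Suc.prems by (simp add: mult_le_cancel_left1)
qed

lemma iter_one: "RG_iter D z 1 e = z"
  by (simp add: RG_def)

lemma iter_step:
  assumes z: "z > 0" and h: "\<And>e. RG_iter D z s e \<le> RG_iter D z t e"
  shows "RG_iter D z (Suc t) e \<le> RG_iter D z (Suc s) e"
proof -
  have "RG D (RG_iter D z t) e \<le> RG D (RG_iter D z s) e"
    by (rule RG_anti) (use h iter_bounds[OF z, of D s] in blast)
  thus ?thesis using z by simp
qed

lemma iter_mono:
  assumes z: "z > 0"
  shows "RG_iter D z (2*k) e \<le> RG_iter D z (2*k+2) e \<and> RG_iter D z (2*k+3) e \<le> RG_iter D z (2*k+1) e"
proof (induction k arbitrary: e)
  case 0
  have "RG_iter D z (2*0+1) e = z" by (simp add: RG_def)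
  moreover have "RG_iter D z 0 e = 0" by simp
  ultimately show ?case using iter_bounds[OF z, of D 2 e] iter_bounds[OF z, of D 3 e] by (simp del: RG_iter.simps add: numeral_2_eq_2 numeral_3_eq_3)
next
  case (Suc k)
  have c: "RG_iter D z (Suc (2*k+1)) e \<le> RG_iter D z (Suc (2*k+3)) e" for e
    by (rule iter_step[OF z]) (use Suc.IH in blast)
  have eq: "2*Suc k = Suc (2*k+1)" "2*Suc k+2 = Suc(2*k+3)" "2*Suc k + 3 = Suc(2*Suc k+2)" "2*Suc k+1 = Suc(2*Suc k)"
    by simp_all
  have c': "RG_iter D z (2*Suc k) e \<le> RG_iter D z (2*Suc k+2) e" for e
    by (subst eq(2), subst eq(1), rule c)
  show ?case
  proof
    show "RG_iter D z (2*Suc k) e \<le> RG_iter D z (2*Suc k+2) e" by (rule c')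
    show "RG_iter D z (2*Suc k+3) e \<le> RG_iter D z (2*Suc k+1) e"
      by (subst eq(3), subst eq(4), rule iter_step[OF z], rule c')
  qed
qed

lemma seq_even_odd:
  assumes E: "eventually (\<lambda>n. P (2 * n)) sequentially" and O: "eventually (\<lambda>n. P (2 * n + 1)) sequentially"
  shows "eventually P sequentially"
proof -
  from E obtain n_e where [intro]: "\<And>n. n \<ge> n_e \<Longrightarrow> P (2 * n)"
    by (auto simp: eventually_sequentially)
  moreover
  from O obtain n_o where [intro]: "\<And>n. n \<ge> n_o \<Longrightarrow> P (Suc (2 * n))"
    by (auto simp: eventually_sequentially)
  show ?thesis
    unfolding eventually_sequentially
  proof (intro exI allI impI)
    fix n assume "max (2 * n_e) (2 * n_o + 1) \<le> n" then show "P n"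
      by (cases "even n") (auto elim!: evenE oddE )
  qed
qed

lemma limseq_even_odd':
  assumes "(\<lambda>n. f (2 * n)) \<longlonglongrightarrow> (l :: 'b :: topological_space)"
      and "(\<lambda>n. f (2 * n + 1)) \<longlonglongrightarrow> l"
  shows "f \<longlonglongrightarrow> l"
  using assms by (auto simp: filterlim_iff intro: seq_even_odd)




lemma RG_tendsto:
  fixes G :: "'a \<times> 'a \<Rightarrow> real"
  assumes h: "\<And>d. (\<lambda>k. F k d) \<longlonglongrightarrow> G d" and G: "\<And>d. d \<in> D \<Longrightarrow> 0 \<le> G d"
  shows "(\<lambda>k. RG D (F k) e) \<longlonglongrightarrow> RG D G e"
  unfolding RG_def
proof (rule tendsto_divide)
  show "(\<lambda>k. 1 + (\<Sum>w\<in>nbrs D (fst e) - {snd e}. F k (w, fst e))) \<longlonglongrightarrow> 1 + (\<Sum>w\<in>nbrs D (fst e) - {snd e}. G (w, fst e))"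
    by (intro tendsto_add tendsto_const tendsto_sum h)
  show "1 + (\<Sum>w\<in>nbrs D (fst e) - {snd e}. G (w, fst e)) \<noteq> 0"
    using RG_sum_nonneg[of D G e] G by fastforce
qed simp

lemma iter_conv:
  fixes D :: "('a \<times> 'a) set"
  assumes fin: "finite D" and z: "z > 0"
  shows "\<exists>L. \<forall>e\<in>D. L e > 0 \<and> L e = z * RG D L e \<and> (\<lambda>t. RG_iter D z t e) \<longlonglongrightarrow> L e"
proof -
  let ?X = "RG_iter D z"
  have inc: "incseq (\<lambda>k. ?X (2*k) e)" for e
    by (rule incseq_SucI) (use iter_mono[OF z, of D _ e] in simp)
  have dec: "decseq (\<lambda>k. ?X (2*k+1) e)" for e
  proof (rule decseq_SucI)
    fix k
    have e3: "2 * Suc k + 1 = 2*k+3" by simp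
    show "?X (2*Suc k+1) e \<le> ?X (2*k+1) e" unfolding e3 using iter_mono[OF z, of D k e] by blast
  qed
  have bd1: "\<And>t e. ?X t e \<le> z" and bd0: "\<And>t e. 0 \<le> ?X t e" using iter_bounds[OF z] by blast+
  define L where "L e = (SUP k. ?X (2*k) e)" for e
  define U where "U e = (INF k. ?X (2*k+1) e)" for e
  have hL: "(\<lambda>k. ?X (2*k) e) \<longlonglongrightarrow> L e" for e
    unfolding L_def by (rule LIMSEQ_incseq_SUP[OF _ inc]) (auto intro!: bdd_aboveI[where M=z] simp del: RG_iter.simps simp add: bd1)
  have hU: "(\<lambda>k. ?X (2*k+1) e) \<longlonglongrightarrow> U e" for e
    unfolding U_def by (rule LIMSEQ_decseq_INF[OF _ dec]) (auto intro!: bdd_belowI[where m=0] simp del: RG_iter.simps simp add: bd0)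
  have L0: "0 \<le> L e" for e
    by (rule LIMSEQ_le_const[OF hL]) (auto simp del: RG_iter.simps simp add: bd0)
  have U0: "0 \<le> U e" for e
    by (rule LIMSEQ_le_const[OF hU]) (auto simp del: RG_iter.simps simp add: bd0)
  have UL: "U e = z * RG D L e" for e
  proof -
    have "(\<lambda>k. z * RG D (?X (2*k)) e) \<longlonglongrightarrow> z * RG D L e"
      by (intro tendsto_mult tendsto_const RG_tendsto hL L0)
    moreover have "(\<lambda>k. z * RG D (?X (2*k)) e) = (\<lambda>k. ?X (2*k+1) e)" by simp
    ultimately show ?thesis using hU LIMSEQ_unique by metis
  qed
  have LU: "L e = z * RG D U e" for e
  proof -
    have "(\<lambda>k. z * RG D (?X (2*k+1)) e) \<longlonglongrightarrow> z * RG D U e"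
      by (intro tendsto_mult tendsto_const RG_tendsto hU U0)
    moreover have "(\<lambda>k. z * RG D (?X (2*k+1)) e) = (\<lambda>k. ?X (2*Suc k) e)" by simp
    moreover have "(\<lambda>k. ?X (2*Suc k) e) \<longlonglongrightarrow> L e" using LIMSEQ_Suc[OF hL] .
    ultimately show ?thesis using LIMSEQ_unique by metis
  qed
  have Lp: "L e > 0" for e using LU RG_pos[of D U e] U0 z by simp
  have Up: "U e > 0" for e using UL RG_pos[of D L e] L0 z by simp
  have eq: "\<forall>e\<in>D. L e \<le> U e \<and> U e \<le> 1 * L e"
  proof (rule ratio_lemma[OF fin order_refl])
    show "\<And>e. e \<in> D \<Longrightarrow> 0 < L e \<and> 0 < U e" using Lp Up by blast
  next
    fix c :: real assume c: "c > 1" and h: "\<forall>d\<in>D. L d \<le> c * U d \<and> U d \<le> c * 1 * L d"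
    show "\<forall>e\<in>D. L e < c * U e \<and> U e < c * 1 * L e"
    proof
      fix e assume e: "e \<in> D"
      have 1: "RG D U e < c * RG D L e" by (rule RG_K[OF c]) (use h L0 U0 in auto)
      have 2: "RG D L e < c * RG D U e" by (rule RG_K[OF c]) (use h L0 U0 in auto)
      show "L e < c * U e \<and> U e < c * 1 * L e"
        using 1 2 z LU[of e] UL[of e] by (simp add: mult.left_commute)
    qed
  qed
  have LUe: "\<And>e. e \<in> D \<Longrightarrow> U e = L e" using eq by force
  show ?thesis
  proof (intro exI ballI conjI)
    fix e assume e: "e \<in> D"
    show "L e > 0" by (rule Lp)
    show "L e = z * RG D L e" using LU[of e] RG_cong[of D U L e] LUe by simp
    show "(\<lambda>t. RG_iter D z t e) \<longlonglongrightarrow> L e"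
      by (rule limseq_even_odd'[OF hL]) (use hU[of e] LUe[OF e] in simp)
  qed
qed

lemma fp_mono:
  fixes A B :: "'a \<times> 'a \<Rightarrow> real"
  assumes fin: "finite D" and z1: "0 < z1" and z12: "z1 \<le> z2"
    and A: "\<forall>e\<in>D. 0 \<le> A e" "\<forall>e\<in>D. A e = z1 * RG D A e"
    and B: "\<forall>e\<in>D. 0 \<le> B e" "\<forall>e\<in>D. B e = z2 * RG D B e"
  shows "\<forall>e\<in>D. A e \<le> B e \<and> B e / z2 \<le> A e / z1"
proof -
  define \<rho> where "\<rho> = z2 / z1"
  have z2: "z2 > 0" using z1 z12 by simp
  have rho: "\<rho> \<ge> 1" unfolding \<rho>_def using z1 z12 by simp
  have r2: "z2 = \<rho> * z1" unfolding \<rho>_def using z1 by simp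
  have "\<forall>e\<in>D. A e \<le> B e \<and> B e \<le> \<rho> * A e"
  proof (rule ratio_lemma[OF fin rho])
    show "\<And>e. e \<in> D \<Longrightarrow> 0 < A e \<and> 0 < B e" using fp_pos[OF z1] fp_pos[OF z2] A B by blast
  next
    fix c :: real assume c: "c > 1" and h: "\<forall>d\<in>D. A d \<le> c * B d \<and> B d \<le> c * \<rho> * A d"
    have cr: "c * \<rho> > 1" proof -
      have "c * 1 \<le> c * \<rho>" using rho c by (intro mult_left_mono) auto
      thus ?thesis using c by linarith
    qed
    show "\<forall>e\<in>D. A e < c * B e \<and> B e < c * \<rho> * A e"
    proof
      fix e assume e: "e \<in> D"
      have 1: "RG D A e < (c * \<rho>) * RG D B e"
        by (rule RG_K[OF cr]) (use h A B c rho cr in \<open>auto simp: mult.assoc\<close>)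
      have 2: "RG D B e < c * RG D A e" by (rule RG_K[OF c]) (use h A B in auto)
      have "A e = z1 * RG D A e" using A e by blast
      also have "\<dots> < z1 * ((c * \<rho>) * RG D B e)" using 1 z1 by simp
      also have "\<dots> = c * (z2 * RG D B e)" using r2 by simp
      also have "\<dots> = c * B e" using B e by simp
      finally have a: "A e < c * B e" .
      have "B e = z2 * RG D B e" using B e by blast
      also have "\<dots> < z2 * (c * RG D A e)" using 2 z2 by simp
      also have "\<dots> = c * \<rho> * (z1 * RG D A e)" using r2 by simp
      also have "\<dots> = c * \<rho> * A e" using A e by simp
      finally show "A e < c * B e \<and> B e < c * \<rho> * A e" using a by simp
    qed
  qed
  then show ?thesis
  proof (intro ballI conjI)
    fix e assume e: "e \<in> D" and h: "\<forall>e\<in>D. A e \<le> B e \<and> B e \<le> \<rho> * A e"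
    show "A e \<le> B e" using h e by blast
    have "B e \<le> \<rho> * A e" using h e by blast
    hence "B e * z1 \<le> A e * z2" using r2 z1 by (simp add: mult_right_mono mult.commute mult.left_commute)
    thus "B e / z2 \<le> A e / z1" using z1 z2 by (simp add: divide_simps)
  qed
qed




definition mt :: "'a set set \<Rightarrow> 'a set \<Rightarrow> 'a set set set" where
  "mt F S = {M. M \<subseteq> F \<and> (\<forall>e1\<in>M. \<forall>e2\<in>M. e1 \<noteq> e2 \<longrightarrow> e1 \<inter> e2 = {}) \<and> (\<forall>e\<in>M. e \<inter> S = {})}"

definition Zs :: "real \<Rightarrow> 'a set set \<Rightarrow> 'a set \<Rightarrow> real" where
  "Zs z F S = (\<Sum>M\<in>mt F S. z ^ card M)"

lemma mt_finite: "finite F \<Longrightarrow> finite (mt F S)"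
  by (rule finite_subset[of _ "Pow F"]) (auto simp: mt_def)

lemma mt_elem_finite: "finite F \<Longrightarrow> M \<in> mt F S \<Longrightarrow> finite M"
  unfolding mt_def by (auto intro: finite_subset)

lemma Zs_pos:
  assumes "finite F" "z > 0" shows "Zs z F S > 0"
proof -
  have "{} \<in> mt F S" by (simp add: mt_def)
  hence "z ^ card ({}::'a set set) \<le> Zs z F S"
    unfolding Zs_def using assms by (intro member_le_sum mt_finite) auto
  thus ?thesis by simp
qed

lemma Zs_cong:
  assumes h: "\<And>e. e \<in> F \<Longrightarrow> e \<inter> S = e \<inter> S'"
  shows "Zs z F S = Zs z F S'"
proof -
  have eqv: "(\<forall>e\<in>M. e \<inter> S = {}) = (\<forall>e\<in>M. e \<inter> S' = {})" if M: "M \<subseteq> F" for M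
  proof (intro iffI ballI)
    fix e assume A: "\<forall>e\<in>M. e \<inter> S = {}" and e: "e \<in> M"
    have "e \<in> F" using M e by (rule subsetD)
    from h[OF this] A e show "e \<inter> S' = {}" by simp
  next
    fix e assume A: "\<forall>e\<in>M. e \<inter> S' = {}" and e: "e \<in> M"
    have "e \<in> F" using M e by (rule subsetD)
    from h[OF this] A e show "e \<inter> S = {}" by simp
  qed
  have "M \<in> mt F S \<longleftrightarrow> M \<in> mt F S'" for M
    unfolding mt_def mem_Collect_eq using eqv[of M] by (cases "M \<subseteq> F") simp_all
  hence "mt F S = mt F S'" by blast
  thus ?thesis by (simp add: Zs_def)
qed

lemma Zs_remove: "e \<inter> S \<noteq> {} \<Longrightarrow> Zs z (F - {e}) S = Zs z F S"
proof -
  assume h: "e \<inter> S \<noteq> {}"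
  have "mt (F - {e}) S = mt F S" unfolding mt_def using h by auto
  thus ?thesis by (simp add: Zs_def)
qed

lemma Zs_split:
  assumes "finite F"
  shows "Zs z F S = Zs z (F - {e}) S + (\<Sum>M\<in>{M\<in>mt F S. e\<in>M}. z ^ card M)"
proof -
  have 1: "mt F S \<inter> {M. e \<in> M} = {M\<in>mt F S. e\<in>M}" by blast
  have 2: "mt F S - {M. e \<in> M} = mt (F - {e}) S" unfolding mt_def by auto
  show ?thesis unfolding Zs_def
    using sum.Int_Diff[OF mt_finite[OF assms], of "\<lambda>M. z ^ card M" S "{M. e \<in> M}"] 1 2 by simp
qed

lemma Zs_contain:
  assumes fin: "finite F" and e: "e \<in> F" "e \<noteq> {}" "e \<inter> S = {}"
  shows "(\<Sum>M\<in>{M\<in>mt F S. e\<in>M}. z ^ card M) = z * Zs z F (S \<union> e)"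
proof -
  have enot: "e \<notin> M" if "M \<in> mt F (S \<union> e)" for M
    using that e(2) unfolding mt_def by auto
  have bij: "bij_betw (insert e) (mt F (S \<union> e)) {M\<in>mt F S. e\<in>M}"
  proof (rule bij_betw_byWitness[where f' = "\<lambda>M. M - {e}"])
    show "\<forall>M\<in>mt F (S \<union> e). insert e M - {e} = M" using enot by auto
    show "\<forall>M\<in>{M \<in> mt F S. e \<in> M}. insert e (M - {e}) = M" by auto
    show "insert e ` mt F (S \<union> e) \<subseteq> {M \<in> mt F S. e \<in> M}"
    proof
      fix M' assume "M' \<in> insert e ` mt F (S \<union> e)"
      then obtain M where M: "M \<in> mt F (S \<union> e)" and M': "M' = insert e M" by blast
      have 1: "M \<subseteq> F" and 2: "\<forall>e1\<in>M. \<forall>e2\<in>M. e1 \<noteq> e2 \<longrightarrow> e1 \<inter> e2 = {}"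
        and 3: "\<forall>e'\<in>M. e' \<inter> (S \<union> e) = {}" using M unfolding mt_def by auto
      have 4: "\<forall>e'\<in>M. e' \<inter> e = {} \<and> e \<inter> e' = {} \<and> e' \<inter> S = {}" using 3 by auto
      show "M' \<in> {M \<in> mt F S. e \<in> M}" unfolding M' mt_def using 1 2 4 e by auto
    qed
    show "(\<lambda>M. M - {e}) ` {M \<in> mt F S. e \<in> M} \<subseteq> mt F (S \<union> e)"
    proof
      fix M' assume "M' \<in> (\<lambda>M. M - {e}) ` {M \<in> mt F S. e \<in> M}"
      then obtain M where M: "M \<in> mt F S" "e \<in> M" and M': "M' = M - {e}" by blast
      have 1: "M \<subseteq> F" and 2: "\<forall>e1\<in>M. \<forall>e2\<in>M. e1 \<noteq> e2 \<longrightarrow> e1 \<inter> e2 = {}"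
        and 3: "\<forall>e'\<in>M. e' \<inter> S = {}" using M unfolding mt_def by auto
      have 4: "\<forall>e'\<in>M - {e}. e' \<inter> e = {}" using 2 M(2) by auto
      show "M' \<in> mt F (S \<union> e)" unfolding M' mt_def using 1 2 3 4 by auto
    qed
  qed
  have "(\<Sum>M\<in>{M\<in>mt F S. e\<in>M}. z ^ card M) = (\<Sum>M\<in>mt F (S \<union> e). z ^ card (insert e M))"
    by (rule sum.reindex_bij_betw[OF bij, symmetric])
  also have "\<dots> = (\<Sum>M\<in>mt F (S \<union> e). z * z ^ card M)"
    by (rule sum.cong) (use enot mt_elem_finite[OF fin] in auto)
  also have "\<dots> = z * Zs z F (S \<union> e)" by (simp add: Zs_def sum_distrib_left)
  finally show ?thesis .
qed

lemma Zs_vertex: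
  assumes fin: "finite F"
  shows "Zs z F {} = Zs z F {u} + (\<Sum>e\<in>{e\<in>F. u\<in>e}. z * Zs z F e)"
proof -
  let ?E = "{e\<in>F. u\<in>e}"
  let ?P = "\<lambda>e. {M\<in>mt F {}. e\<in>M}"
  have finE: "finite ?E" using fin by simp
  have eq: "mt F {} = mt F {u} \<union> (\<Union>e\<in>?E. ?P e)"
  proof (rule set_eqI)
    fix M
    show "M \<in> mt F {} \<longleftrightarrow> M \<in> mt F {u} \<union> (\<Union>e\<in>?E. ?P e)"
    proof
      assume M: "M \<in> mt F {}"
      show "M \<in> mt F {u} \<union> (\<Union>e\<in>?E. ?P e)"
      proof (cases "\<exists>e\<in>M. u \<in> e")
        case True
        then obtain e where e: "e \<in> M" "u \<in> e" by blast
        have "e \<in> F" using M e(1) unfolding mt_def by auto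
        thus ?thesis using e M by auto
      next
        case False
        hence "M \<in> mt F {u}" using M unfolding mt_def by auto
        thus ?thesis by simp
      qed
    next
      assume "M \<in> mt F {u} \<union> (\<Union>e\<in>?E. ?P e)"
      thus "M \<in> mt F {}" unfolding mt_def by auto
    qed
  qed
  have d1: "mt F {u} \<inter> (\<Union>e\<in>?E. ?P e) = {}" unfolding mt_def by auto
  have d2: "\<forall>e\<in>?E. \<forall>e'\<in>?E. e \<noteq> e' \<longrightarrow> ?P e \<inter> ?P e' = {}"
  proof (intro ballI impI)
    fix e e' assume e: "e \<in> ?E" "e' \<in> ?E" "e \<noteq> e'"
    show "?P e \<inter> ?P e' = {}"
    proof (rule ccontr)
      assume "?P e \<inter> ?P e' \<noteq> {}"
      then obtain M where M: "M \<in> mt F {}" "e \<in> M" "e' \<in> M" by blast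
      hence "e \<inter> e' = {}" using e(3) unfolding mt_def by blast
      thus False using e(1,2) by blast
    qed
  qed
  have fP: "\<forall>e\<in>?E. finite (?P e)" using mt_finite[OF fin] by simp
  have "Zs z F {} = (\<Sum>M\<in>mt F {u} \<union> (\<Union>e\<in>?E. ?P e). z ^ card M)"
    unfolding Zs_def by (simp only: eq[symmetric])
  also have "\<dots> = Zs z F {u} + (\<Sum>M\<in>(\<Union>e\<in>?E. ?P e). z ^ card M)"
    unfolding Zs_def
  proof (rule sum.union_disjoint[OF mt_finite[OF fin] _ d1])
    show "finite (\<Union>e\<in>?E. ?P e)" using fP finE by blast
  qed
  also have "(\<Sum>M\<in>(\<Union>e\<in>?E. ?P e). z ^ card M) = (\<Sum>e\<in>?E. \<Sum>M\<in>?P e. z ^ card M)"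
    by (rule sum.UNION_disjoint[OF finE]) (use fP d2 in blast)+
  also have "\<dots> = (\<Sum>e\<in>?E. z * Zs z F e)"
    by (rule sum.cong) (use Zs_contain[OF fin, of _ "{}" z] in auto)
  finally show ?thesis .
qed

lemma Zs_prod:
  assumes f1: "finite F1" and f2: "finite F2" and vd: "\<forall>e1\<in>F1. \<forall>e2\<in>F2. e1 \<inter> e2 = {}"
    and dj: "F1 \<inter> F2 = {}"
  shows "Zs z (F1 \<union> F2) S = Zs z F1 S * Zs z F2 S"
proof -
  have bij: "bij_betw (\<lambda>(M1, M2). M1 \<union> M2) (mt F1 S \<times> mt F2 S) (mt (F1 \<union> F2) S)"
  proof (rule bij_betw_byWitness[where f' = "\<lambda>M. (M \<inter> F1, M \<inter> F2)"])
    show "\<forall>a\<in>mt F1 S \<times> mt F2 S. ((case a of (M1, M2) \<Rightarrow> M1 \<union> M2) \<inter> F1, (case a of (M1, M2) \<Rightarrow> M1 \<union> M2) \<inter> F2) = a"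
    proof
      fix a assume a: "a \<in> mt F1 S \<times> mt F2 S"
      obtain M1 M2 where aa: "a = (M1, M2)" by (cases a)
      have s: "M1 \<subseteq> F1" "M2 \<subseteq> F2" using a aa unfolding mt_def by auto
      have "(M1 \<union> M2) \<inter> F1 = M1" using s dj by blast
      moreover have "(M1 \<union> M2) \<inter> F2 = M2" using s dj by blast
      ultimately show "((case a of (M1, M2) \<Rightarrow> M1 \<union> M2) \<inter> F1, (case a of (M1, M2) \<Rightarrow> M1 \<union> M2) \<inter> F2) = a"
        using aa by simp
    qed
    show "\<forall>M\<in>mt (F1 \<union> F2) S. (case (M \<inter> F1, M \<inter> F2) of (M1, M2) \<Rightarrow> M1 \<union> M2) = M"
    proof
      fix M assume "M \<in> mt (F1 \<union> F2) S"
      hence "M \<subseteq> F1 \<union> F2" unfolding mt_def by auto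
      thus "(case (M \<inter> F1, M \<inter> F2) of (M1, M2) \<Rightarrow> M1 \<union> M2) = M" by auto
    qed
    show "(\<lambda>(M1, M2). M1 \<union> M2) ` (mt F1 S \<times> mt F2 S) \<subseteq> mt (F1 \<union> F2) S"
    proof
      fix M assume "M \<in> (\<lambda>(M1, M2). M1 \<union> M2) ` (mt F1 S \<times> mt F2 S)"
      then obtain M1 M2 where M: "M = M1 \<union> M2" and m1: "M1 \<in> mt F1 S" and m2: "M2 \<in> mt F2 S" by auto
      have s: "M1 \<subseteq> F1" "M2 \<subseteq> F2" using m1 m2 unfolding mt_def by auto
      have p1: "\<forall>e1\<in>M1. \<forall>e2\<in>M1. e1 \<noteq> e2 \<longrightarrow> e1 \<inter> e2 = {}" "\<forall>e\<in>M1. e \<inter> S = {}" using m1 unfolding mt_def by auto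
      have p2: "\<forall>e1\<in>M2. \<forall>e2\<in>M2. e1 \<noteq> e2 \<longrightarrow> e1 \<inter> e2 = {}" "\<forall>e\<in>M2. e \<inter> S = {}" using m2 unfolding mt_def by auto
      have c: "\<forall>e1\<in>M1. \<forall>e2\<in>M2. e1 \<inter> e2 = {} \<and> e2 \<inter> e1 = {}" using vd s by blast
      have "\<forall>e1\<in>M. \<forall>e2\<in>M. e1 \<noteq> e2 \<longrightarrow> e1 \<inter> e2 = {}"
        unfolding M
      proof (intro ballI impI)
        fix e1 e2 assume a: "e1 \<in> M1 \<union> M2" "e2 \<in> M1 \<union> M2" "e1 \<noteq> e2"
        show "e1 \<inter> e2 = {}"
        proof (cases "e1 \<in> M1")
          case T1: True
          show ?thesis
          proof (cases "e2 \<in> M1")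
            case True thus ?thesis using T1 a(3) p1(1) by blast
          next
            case False hence "e2 \<in> M2" using a(2) by blast
            thus ?thesis using T1 c by blast
          qed
        next
          case F1: False
          hence e1: "e1 \<in> M2" using a(1) by blast
          show ?thesis
          proof (cases "e2 \<in> M1")
            case True thus ?thesis using e1 c by blast
          next
            case False hence "e2 \<in> M2" using a(2) by blast
            thus ?thesis using e1 a(3) p2(1) by blast
          qed
        qed
      qed
      moreover have "M \<subseteq> F1 \<union> F2" using s M by auto
      moreover have "\<forall>e\<in>M. e \<inter> S = {}" using p1(2) p2(2) M by auto
      ultimately show "M \<in> mt (F1 \<union> F2) S" unfolding mt_def by simp
    qed
    show "(\<lambda>M. (M \<inter> F1, M \<inter> F2)) ` mt (F1 \<union> F2) S \<subseteq> mt F1 S \<times> mt F2 S"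
    proof
      fix P assume "P \<in> (\<lambda>M. (M \<inter> F1, M \<inter> F2)) ` mt (F1 \<union> F2) S"
      then obtain M where P: "P = (M \<inter> F1, M \<inter> F2)" and M: "M \<in> mt (F1 \<union> F2) S" by auto
      have p: "\<forall>e1\<in>M. \<forall>e2\<in>M. e1 \<noteq> e2 \<longrightarrow> e1 \<inter> e2 = {}" "\<forall>e\<in>M. e \<inter> S = {}" using M unfolding mt_def by auto
      have "M \<inter> F1 \<in> mt F1 S" unfolding mt_def using p by auto
      moreover have "M \<inter> F2 \<in> mt F2 S" unfolding mt_def using p by auto
      ultimately show "P \<in> mt F1 S \<times> mt F2 S" using P by simp
    qed
  qed
  have "Zs z F1 S * Zs z F2 S = (\<Sum>M1\<in>mt F1 S. \<Sum>M2\<in>mt F2 S. z ^ card M1 * z ^ card M2)"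
    unfolding Zs_def by (rule sum_product)
  also have "\<dots> = (\<Sum>p\<in>mt F1 S \<times> mt F2 S. (\<lambda>(M1, M2). z ^ card M1 * z ^ card M2) p)"
    by (rule sum.cartesian_product)
  also have "\<dots> = (\<Sum>p\<in>mt F1 S \<times> mt F2 S. z ^ card ((\<lambda>(M1, M2). M1 \<union> M2) p))"
  proof (rule sum.cong[OF refl])
    fix p assume p: "p \<in> mt F1 S \<times> mt F2 S"
    obtain M1 M2 where pp: "p = (M1, M2)" by (cases p)
    have "M1 \<subseteq> F1" "M2 \<subseteq> F2" using p pp by (auto simp: mt_def)
    hence "card (M1 \<union> M2) = card M1 + card M2"
      using dj f1 f2 by (intro card_Un_disjoint) (auto intro: finite_subset)
    thus "(\<lambda>(M1, M2). z ^ card M1 * z ^ card M2) p = z ^ card ((\<lambda>(M1, M2). M1 \<union> M2) p)"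
      using pp by (simp add: power_add)
  qed
  also have "\<dots> = Zs z (F1 \<union> F2) S"
    unfolding Zs_def by (rule sum.reindex_bij_betw[OF bij])
  finally show ?thesis by simp
qed




lemma uedges_image: "uedges D = (\<lambda>(u, v). {u, v}) ` D"
  unfolding uedges_def by auto

lemma uedges_finite: "finite D \<Longrightarrow> finite (uedges D)"
  unfolding uedges_image by simp

lemma matchings_eq:
  assumes "finite D"
  shows "matchings D = mt (uedges D) {}"
proof (rule set_eqI)
  fix M
  show "M \<in> matchings D \<longleftrightarrow> M \<in> mt (uedges D) {}"
  proof (cases "M \<subseteq> uedges D")
    case False thus ?thesis unfolding matchings_def mt_def by auto
  next
    case True
    hence finM: "finite M" using uedges_finite[OF assms] finite_subset by auto
    have "(\<forall>v. card {e \<in> M. v \<in> e} \<le> 1) \<longleftrightarrow> (\<forall>e1\<in>M. \<forall>e2\<in>M. e1 \<noteq> e2 \<longrightarrow> e1 \<inter> e2 = {})"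
    proof
      assume h: "\<forall>v. card {e \<in> M. v \<in> e} \<le> 1"
      show "\<forall>e1\<in>M. \<forall>e2\<in>M. e1 \<noteq> e2 \<longrightarrow> e1 \<inter> e2 = {}"
      proof (intro ballI impI)
        fix e1 e2 assume e: "e1 \<in> M" "e2 \<in> M" "e1 \<noteq> e2"
        show "e1 \<inter> e2 = {}"
        proof (rule ccontr)
          assume "e1 \<inter> e2 \<noteq> {}"
          then obtain x where x: "x \<in> e1" "x \<in> e2" by blast
          have fin: "finite {e \<in> M. x \<in> e}" using finM by simp
          have "card {e \<in> M. x \<in> e} \<le> Suc 0" using h by simp
          hence "\<forall>a\<in>{e \<in> M. x \<in> e}. \<forall>b\<in>{e \<in> M. x \<in> e}. a = b"
            using card_le_Suc0_iff_eq[OF fin] by blast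
          thus False using e x by blast
        qed
      qed
    next
      assume h: "\<forall>e1\<in>M. \<forall>e2\<in>M. e1 \<noteq> e2 \<longrightarrow> e1 \<inter> e2 = {}"
      show "\<forall>v. card {e \<in> M. v \<in> e} \<le> 1"
      proof
        fix v
        have fin: "finite {e \<in> M. v \<in> e}" using finM by simp
        have "\<forall>a\<in>{e \<in> M. v \<in> e}. \<forall>b\<in>{e \<in> M. v \<in> e}. a = b" using h by blast
        hence "card {e \<in> M. v \<in> e} \<le> Suc 0" using card_le_Suc0_iff_eq[OF fin] by blast
        thus "card {e \<in> M. v \<in> e} \<le> 1" by simp
      qed
    qed
    thus ?thesis using True unfolding matchings_def mt_def by simp
  qed
qed

lemma partition_fn_eq: "finite D \<Longrightarrow> partition_fn D z = Zs z (uedges D) {}"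
  unfolding partition_fn_def Zs_def matchings_eq by simp

lemma rtrancl_path_last: "rtrancl_path r x xs y \<Longrightarrow> last (x # xs) = y"
  by (induction rule: rtrancl_path.induct) auto

lemma rtrancl_path_steps: "rtrancl_path r x xs y \<Longrightarrow> \<forall>i < length xs. r ((x # xs) ! i) (xs ! i)"
proof (induction rule: rtrancl_path.induct)
  case (base x) then show ?case by simp
next
  case (step x y ys z)
  show ?case
  proof (intro allI impI)
    fix i assume i: "i < length (y # ys)"
    show "r ((x # y # ys) ! i) ((y # ys) ! i)"
    proof (cases i)
      case 0 then show ?thesis using step by simp
    next
      case (Suc j) then show ?thesis using step i by simp
    qed
  qed
qed

lemma tree_no_path:
  assumes fg: "finite_graph V D" and nc: "\<nexists>cs. is_cycle D cs" and uv: "(u, v) \<in> D"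
  shows "(u, v) \<notin> (D - {(u, v), (v, u)})\<^sup>*"
proof
  let ?D' = "D - {(u, v), (v, u)}"
  let ?r = "\<lambda>a b. (a, b) \<in> ?D'"
  assume "(u, v) \<in> ?D'\<^sup>*"
  moreover have eqR: "{(x, y). ?r x y} = ?D'" by auto
  ultimately have "?r\<^sup>*\<^sup>* u v" by (metis rtranclp_rtrancl_eq)
  then obtain xs where "rtrancl_path ?r u xs v" using rtranclp_eq_rtrancl_path by metis
  then obtain xs' where p: "rtrancl_path ?r u xs' v" and d: "distinct (u # xs')"
    using rtrancl_path_distinct by metis
  have uv_ne: "u \<noteq> v" using fg uv unfolding finite_graph_def by auto
  have last: "last (u # xs') = v" using rtrancl_path_last[OF p] .
  have steps: "\<forall>i < length xs'. ?r ((u # xs') ! i) (xs' ! i)" using rtrancl_path_steps[OF p] .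
  have ne: "xs' \<noteq> []" using last uv_ne by auto
  have len: "length xs' \<ge> 2"
  proof (rule ccontr)
    assume "\<not> length xs' \<ge> 2"
    with ne obtain w where w: "xs' = [w]" by (cases xs'; cases "tl xs'") auto
    hence "w = v" using last by simp
    thus False using steps w by auto
  qed
  have sym: "sym D" using fg unfolding finite_graph_def by auto
  have "is_cycle D (u # xs')"
    unfolding is_cycle_def
  proof (intro conjI allI impI)
    show "3 \<le> length (u # xs')" using len by simp
    show "distinct (u # xs')" by (rule d)
    fix i assume "i < length (u # xs') - 1"
    hence "i < length xs'" by simp
    thus "((u # xs') ! i, (u # xs') ! Suc i) \<in> D" using steps by auto
  next
    show "(last (u # xs'), hd (u # xs')) \<in> D" using last uv sym by (auto dest: symD)
  qed
  thus False using nc by blast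
qed

lemma tree_identity:
  assumes fg: "finite_graph V D" and nc: "\<nexists>cs. is_cycle D cs" and uv: "(u, v) \<in> D"
  shows "Zs z (uedges D) {u} * Zs z (uedges D) {v} = Zs z (uedges D) {u, v} * Zs z (uedges D - {{u, v}}) {}"
proof -
  let ?D' = "D - {(u, v), (v, u)}"
  define U where "U = uedges D"
  define F where "F = U - {{u, v}}"
  define C where "C = {x. (u, x) \<in> ?D'\<^sup>*}"
  define F1 where "F1 = {e \<in> F. e \<subseteq> C}"
  define F2 where "F2 = {e \<in> F. e \<inter> C = {}}"
  have finD: "finite D" using fg unfolding finite_graph_def by (auto intro: finite_subset)
  have sym: "sym D" using fg unfolding finite_graph_def by auto
  have finU: "finite U" unfolding U_def using uedges_finite[OF finD] .
  have uC: "u \<in> C" unfolding C_def by simp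
  have vC: "v \<notin> C" unfolding C_def using tree_no_path[OF fg nc uv] by simp
  have clos: "a \<in> C \<longleftrightarrow> b \<in> C" if ab: "(a, b) \<in> ?D'" for a b
  proof -
    have ba: "(b, a) \<in> ?D'" using ab sym by (auto dest: symD)
    show ?thesis unfolding C_def using ab ba by (auto intro: rtrancl_into_rtrancl)
  qed
  have split: "e \<subseteq> C \<or> e \<inter> C = {}" if e: "e \<in> F" for e
  proof -
    obtain a b where e': "e = {a, b}" "(a, b) \<in> D" using e unfolding F_def U_def uedges_def by auto
    have "e \<noteq> {u, v}" using e unfolding F_def by auto
    hence "(a, b) \<in> ?D'" using e' by auto
    thus ?thesis using clos e' by auto
  qed
  have FF: "F = F1 \<union> F2" unfolding F1_def F2_def using split by auto
  have nonempty: "e \<noteq> {}" if "e \<in> F" for e using that unfolding F_def U_def uedges_def by auto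
  have dj: "F1 \<inter> F2 = {}" unfolding F1_def F2_def using nonempty by auto
  have vd: "\<forall>e1\<in>F1. \<forall>e2\<in>F2. e1 \<inter> e2 = {}" unfolding F1_def F2_def by auto
  have f1: "finite F1" "finite F2" unfolding F1_def F2_def F_def using finU by auto
  have prod: "Zs z F S = Zs z F1 S * Zs z F2 S" for S
    unfolding FF by (rule Zs_prod[OF f1 vd dj])
  have r: "Zs z U S = Zs z F S" if "{u, v} \<inter> S \<noteq> {}" for S
    unfolding F_def using Zs_remove[OF that] by simp
  have a1: "Zs z F2 {u} = Zs z F2 {}" by (rule Zs_cong) (use uC in \<open>auto simp: F2_def\<close>)
  have a2: "Zs z F1 {v} = Zs z F1 {}" by (rule Zs_cong) (use vC in \<open>auto simp: F1_def\<close>)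
  have a3: "Zs z F1 {u, v} = Zs z F1 {u}" by (rule Zs_cong) (use vC in \<open>auto simp: F1_def\<close>)
  have a4: "Zs z F2 {u, v} = Zs z F2 {v}" by (rule Zs_cong) (use uC in \<open>auto simp: F2_def\<close>)
  have "Zs z U {u} * Zs z U {v} = (Zs z F1 {u} * Zs z F2 {}) * (Zs z F1 {} * Zs z F2 {v})"
    using r[of "{u}"] r[of "{v}"] prod[of "{u}"] prod[of "{v}"] a1 a2 by simp
  also have "\<dots> = (Zs z F1 {u} * Zs z F2 {v}) * (Zs z F1 {} * Zs z F2 {})" by simp
  also have "\<dots> = Zs z U {u, v} * Zs z F {}"
    using r[of "{u, v}"] prod[of "{u, v}"] prod[of "{}"] a3 a4 by simp
  finally show ?thesis unfolding U_def F_def .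
qed




definition Yh :: "real \<Rightarrow> ('a \<times> 'a) set \<Rightarrow> 'a \<times> 'a \<Rightarrow> real" where
  "Yh z D e = z * Zs z (uedges D) {fst e} / Zs z (uedges D - {{fst e, snd e}}) {}"

lemma Yh_pos:
  assumes "finite D" "z > 0" shows "Yh z D e > 0"
  unfolding Yh_def using assms Zs_pos[of "uedges D" z] Zs_pos[of "uedges D - _" z] uedges_finite[OF assms(1)]
  by (simp add: Zs_pos)

lemma Yh_alt:
  assumes fg: "finite_graph V D" and nc: "\<nexists>cs. is_cycle D cs" and wu: "(w, u) \<in> D" and z: "z > 0"
  shows "Yh z D (w, u) = z * Zs z (uedges D) {w, u} / Zs z (uedges D) {u}"
proof -
  have finD: "finite D" using fg unfolding finite_graph_def by (auto intro: finite_subset)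
  have p1: "Zs z (uedges D) {u} > 0" "Zs z (uedges D - {{w, u}}) {} > 0"
    using Zs_pos[of "uedges D" z] Zs_pos[of "uedges D - {{w, u}}" z] uedges_finite[OF finD] z by auto
  have "Zs z (uedges D) {w} * Zs z (uedges D) {u} = Zs z (uedges D) {w, u} * Zs z (uedges D - {{w, u}}) {}"
    by (rule tree_identity[OF fg nc wu])
  thus ?thesis unfolding Yh_def using p1 by (simp add: divide_simps)
qed

lemma Yh_fp:
  assumes fg: "finite_graph V D" and nc: "\<nexists>cs. is_cycle D cs" and uv: "(u, v) \<in> D" and z: "z > 0"
  shows "Yh z D (u, v) = z * RG D (Yh z D) (u, v)"
proof -
  define U where "U = uedges D"
  define F where "F = U - {{u, v}}"
  define N where "N = nbrs D u - {v}"
  have finD: "finite D" using fg unfolding finite_graph_def by (auto intro: finite_subset)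
  have sym: "sym D" using fg unfolding finite_graph_def by auto
  have irr: "\<And>x. (x, x) \<notin> D" using fg unfolding finite_graph_def by auto
  have finU: "finite U" unfolding U_def using uedges_finite[OF finD] .
  have finF: "finite F" unfolding F_def using finU by simp
  have A: "Zs z U {u} > 0" using Zs_pos[OF finU z] .
  have img: "{e \<in> F. u \<in> e} = (\<lambda>w. {w, u}) ` N"
  proof (rule set_eqI)
    fix e show "e \<in> {e \<in> F. u \<in> e} \<longleftrightarrow> e \<in> (\<lambda>w. {w, u}) ` N"
    proof
      assume "e \<in> {e \<in> F. u \<in> e}"
      hence eF: "e \<in> F" and ue: "u \<in> e" by auto
      obtain a b where ab: "e = {a, b}" "(a, b) \<in> D" using eF unfolding F_def U_def uedges_def by auto
      have ne: "e \<noteq> {u, v}" using eF unfolding F_def by auto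
      show "e \<in> (\<lambda>w. {w, u}) ` N"
      proof (cases "a = u")
        case True
        hence "(b, u) \<in> D" using ab sym by (auto dest: symD)
        moreover have "b \<noteq> v" using ne ab True by auto
        ultimately show ?thesis using ab True unfolding N_def nbrs_def by (auto simp: insert_commute)
      next
        case False
        hence "b = u" using ue ab by auto
        moreover have "a \<noteq> v" using ne ab \<open>b = u\<close> by (auto simp: insert_commute)
        ultimately show ?thesis using ab unfolding N_def nbrs_def by auto
      qed
    next
      assume "e \<in> (\<lambda>w. {w, u}) ` N"
      then obtain w where w: "w \<in> N" "e = {w, u}" by auto
      have wu: "(w, u) \<in> D" using w unfolding N_def nbrs_def by auto
      have "w \<noteq> u" using wu irr by auto
      hence "e \<noteq> {u, v}" using w unfolding N_def by (auto simp: doubleton_eq_iff)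
      moreover have "e \<in> U" using wu w unfolding U_def uedges_def by auto
      ultimately show "e \<in> {e \<in> F. u \<in> e}" using w unfolding F_def by auto
    qed
  qed
  have inj: "inj_on (\<lambda>w. {w, u}) N"
  proof (rule inj_onI)
    fix w w' assume w: "w \<in> N" "w' \<in> N" "{w, u} = {w', u}"
    have "w \<noteq> u" "w' \<noteq> u" using w(1,2) irr unfolding N_def nbrs_def by auto
    thus "w = w'" using w(3) by (auto simp: doubleton_eq_iff)
  qed
  have exp: "Zs z F {} = Zs z U {u} + (\<Sum>w\<in>N. z * Zs z U {w, u})"
  proof -
    have "Zs z F {} = Zs z F {u} + (\<Sum>e\<in>{e \<in> F. u \<in> e}. z * Zs z F e)"
      by (rule Zs_vertex[OF finF])
    also have "Zs z F {u} = Zs z U {u}" unfolding F_def by (rule Zs_remove) auto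
    also have "(\<Sum>e\<in>{e \<in> F. u \<in> e}. z * Zs z F e) = (\<Sum>w\<in>N. z * Zs z F {w, u})"
      unfolding img by (rule sum.reindex[OF inj, unfolded comp_def])
    also have "\<dots> = (\<Sum>w\<in>N. z * Zs z U {w, u})"
      unfolding F_def by (rule sum.cong[OF refl]) (subst Zs_remove, auto)
    finally show ?thesis .
  qed
  have Yw: "Yh z D (w, u) = z * Zs z U {w, u} / Zs z U {u}" if "w \<in> N" for w
    unfolding U_def using Yh_alt[OF fg nc _ z] that unfolding N_def nbrs_def by auto
  have "RG D (Yh z D) (u, v) = 1 / (1 + (\<Sum>w\<in>N. Yh z D (w, u)))"
    unfolding RG_def N_def by simp
  also have "(\<Sum>w\<in>N. Yh z D (w, u)) = (\<Sum>w\<in>N. z * Zs z U {w, u}) / Zs z U {u}"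
    by (simp add: Yw sum_divide_distrib)
  also have "1 / (1 + (\<Sum>w\<in>N. z * Zs z U {w, u}) / Zs z U {u}) = Zs z U {u} / Zs z F {}"
    using A unfolding exp by (simp add: divide_simps)
  finally have "RG D (Yh z D) (u, v) = Zs z U {u} / Zs z F {}" .
  thus ?thesis unfolding Yh_def U_def F_def by simp
qed

lemma gibbs_Yh:
  assumes fg: "finite_graph V D" and nc: "\<nexists>cs. is_cycle D cs" and uv: "(u, v) \<in> D" and z: "z > 0"
  shows "gibbs_edge_prob D z {u, v} =
           Yh z D (u, v) * (Yh z D (v, u) / z) / (1 + Yh z D (u, v) * (Yh z D (v, u) / z))"
proof -
  define U where "U = uedges D"
  have finD: "finite D" using fg unfolding finite_graph_def by (auto intro: finite_subset)
  have finU: "finite U" unfolding U_def using uedges_finite[OF finD] .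
  have eU: "{u, v} \<in> U" unfolding U_def uedges_def using uv by auto
  define A where "A = Zs z U {u}"
  define B where "B = Zs z U {v}"
  define Cc where "Cc = Zs z U {u, v}"
  define N where "N = Zs z (U - {{u, v}}) {}"
  have pos: "A > 0" "B > 0" "Cc > 0" "N > 0" unfolding A_def B_def Cc_def N_def using Zs_pos[OF finU z] Zs_pos[of "U - {{u, v}}" z] finU z by auto
  have TI: "A * B = Cc * N" unfolding A_def B_def Cc_def N_def U_def by (rule tree_identity[OF fg nc uv])
  have num: "(\<Sum>M \<in> {M \<in> matchings D. {u, v} \<in> M}. z ^ card M) = z * Cc"
    unfolding matchings_eq[OF finD] Cc_def U_def[symmetric]
    using Zs_contain[OF finU eU, of "{}" z] by simp
  have den: "partition_fn D z = N + z * Cc"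
    unfolding partition_fn_eq[OF finD] U_def[symmetric] N_def Cc_def
    using Zs_split[OF finU, of z "{}" "{u, v}"] Zs_contain[OF finU eU, of "{}" z] by simp
  have y1: "Yh z D (u, v) = z * A / N" unfolding Yh_def A_def N_def U_def by simp
  have y2: "Yh z D (v, u) = z * B / N" unfolding Yh_def B_def N_def U_def by (simp add: insert_commute)
  have "Yh z D (u, v) * (Yh z D (v, u) / z) = z * (A * B) / (N * N)"
    unfolding y1 y2 using z by simp
  also have "\<dots> = z * Cc / N" unfolding TI using pos by simp
  finally have yy: "Yh z D (u, v) * (Yh z D (v, u) / z) = z * Cc / N" .
  show ?thesis unfolding yy gibbs_edge_prob_def num den using pos z by (simp add: divide_simps)
qed




theorem proposition6:
  fixes V :: "'a set" and D :: "('a \<times> 'a) set"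
  assumes "finite_graph V D"
  shows "\<exists>Y :: real \<Rightarrow> 'a \<times> 'a \<Rightarrow> real.
    (\<forall>z > 0.
        (\<forall>e \<in> D. Y z e > 0)
      \<and> (\<forall>e \<in> D. Y z e = z * RG D (Y z) e)
      \<and> (\<forall>X. (\<forall>e \<in> D. X e \<ge> 0) \<and> (\<forall>e \<in> D. X e = z * RG D X e)
              \<longrightarrow> (\<forall>e \<in> D. X e = Y z e))
      \<and> (\<forall>e \<in> D. (\<lambda>t. RG_iter D z t e) \<longlonglongrightarrow> Y z e))
  \<and> (\<forall>z1 z2. 0 < z1 \<and> z1 \<le> z2 \<longrightarrow>
        (\<forall>e \<in> D. Y z1 e \<le> Y z2 e \<and> Y z2 e / z2 \<le> Y z1 e / z1))
  \<and> (is_tree V D \<longrightarrow>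
        (\<forall>z > 0. \<forall>u v. (u, v) \<in> D \<longrightarrow>
           gibbs_edge_prob D z {u, v} =
             Y z (u, v) * RG D (Y z) (v, u) / (1 + Y z (u, v) * RG D (Y z) (v, u))))"
proof -
  have fg: "finite_graph V D" by fact
  have finD: "finite D" using fg unfolding finite_graph_def by (auto intro: finite_subset)
  define Y where "Y z e = lim (\<lambda>t. RG_iter D z t e)" for z e
  have P: "(\<forall>e \<in> D. Y z e > 0) \<and> (\<forall>e \<in> D. Y z e = z * RG D (Y z) e)
      \<and> (\<forall>e \<in> D. (\<lambda>t. RG_iter D z t e) \<longlonglongrightarrow> Y z e)" if z: "z > 0" for z
  proof -
    obtain L where L: "\<forall>e\<in>D. L e > 0 \<and> L e = z * RG D L e \<and> (\<lambda>t. RG_iter D z t e) \<longlonglongrightarrow> L e"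
      using iter_conv[OF finD z] by blast
    have YL: "\<And>e. e \<in> D \<Longrightarrow> Y z e = L e" unfolding Y_def using L limI by blast
    have c: "RG D (Y z) e = RG D L e" for e using YL by (rule RG_cong)
    have a: "\<forall>e \<in> D. Y z e = z * RG D (Y z) e"
    proof
      fix e assume e: "e \<in> D"
      show "Y z e = z * RG D (Y z) e" unfolding c YL[OF e] using L e by blast
    qed
    have b: "\<forall>e \<in> D. Y z e > 0 \<and> (\<lambda>t. RG_iter D z t e) \<longlonglongrightarrow> Y z e"
    proof
      fix e assume e: "e \<in> D"
      show "Y z e > 0 \<and> (\<lambda>t. RG_iter D z t e) \<longlonglongrightarrow> Y z e" unfolding YL[OF e] using L e by blast
    qed
    show ?thesis using a b by blast
  qed
  have U: "\<forall>e \<in> D. X e = Y z e" if z: "z > 0" and X: "\<forall>e \<in> D. X e \<ge> 0" "\<forall>e \<in> D. X e = z * RG D X e" for z X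
    by (rule fp_unique[OF finD z X]) (use P[OF z] in \<open>auto intro: less_imp_le\<close>)
  have h1: "\<forall>z > 0.
        (\<forall>e \<in> D. Y z e > 0)
      \<and> (\<forall>e \<in> D. Y z e = z * RG D (Y z) e)
      \<and> (\<forall>X. (\<forall>e \<in> D. X e \<ge> 0) \<and> (\<forall>e \<in> D. X e = z * RG D X e)
              \<longrightarrow> (\<forall>e \<in> D. X e = Y z e))
      \<and> (\<forall>e \<in> D. (\<lambda>t. RG_iter D z t e) \<longlonglongrightarrow> Y z e)"
  proof (intro allI impI)
    fix z :: real assume z: "z > 0"
    have "\<forall>X. (\<forall>e \<in> D. X e \<ge> 0) \<and> (\<forall>e \<in> D. X e = z * RG D X e) \<longrightarrow> (\<forall>e \<in> D. X e = Y z e)"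
      using U[OF z] by blast
    thus "(\<forall>e \<in> D. Y z e > 0)
      \<and> (\<forall>e \<in> D. Y z e = z * RG D (Y z) e)
      \<and> (\<forall>X. (\<forall>e \<in> D. X e \<ge> 0) \<and> (\<forall>e \<in> D. X e = z * RG D X e)
              \<longrightarrow> (\<forall>e \<in> D. X e = Y z e))
      \<and> (\<forall>e \<in> D. (\<lambda>t. RG_iter D z t e) \<longlonglongrightarrow> Y z e)" using P[OF z] by blast
  qed
  have h2: "\<forall>z1 z2. 0 < z1 \<and> z1 \<le> z2 \<longrightarrow>
        (\<forall>e \<in> D. Y z1 e \<le> Y z2 e \<and> Y z2 e / z2 \<le> Y z1 e / z1)"
  proof (intro allI impI)
    fix z1 z2 :: real assume zz: "0 < z1 \<and> z1 \<le> z2"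
    hence z2: "z2 > 0" by simp
    show "\<forall>e \<in> D. Y z1 e \<le> Y z2 e \<and> Y z2 e / z2 \<le> Y z1 e / z1"
      by (rule fp_mono[OF finD]) (use zz P[of z1] P[OF z2] in \<open>auto intro: less_imp_le\<close>)
  qed
  have h3: "is_tree V D \<longrightarrow>
        (\<forall>z > 0. \<forall>u v. (u, v) \<in> D \<longrightarrow>
           gibbs_edge_prob D z {u, v} =
             Y z (u, v) * RG D (Y z) (v, u) / (1 + Y z (u, v) * RG D (Y z) (v, u)))"
  proof (intro allI impI)
    fix z :: real and u v assume tree: "is_tree V D" and z: "z > 0" and uv: "(u, v) \<in> D"
    have nc: "\<nexists>cs. is_cycle D cs" using tree unfolding is_tree_def by blast
    have YY: "\<forall>e \<in> D. Yh z D e = Y z e"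
    proof (rule U[OF z])
      show "\<forall>e\<in>D. 0 \<le> Yh z D e" using Yh_pos[OF finD z] by (auto intro: less_imp_le)
      show "\<forall>e\<in>D. Yh z D e = z * RG D (Yh z D) e" using Yh_fp[OF fg nc _ z] by auto
    qed
    have vu: "(v, u) \<in> D" using uv fg unfolding finite_graph_def by (auto dest: symD)
    have R: "RG D (Y z) (v, u) = Yh z D (v, u) / z"
      using P[OF z] vu YY z by (auto simp: field_simps)
    show "gibbs_edge_prob D z {u, v} =
             Y z (u, v) * RG D (Y z) (v, u) / (1 + Y z (u, v) * RG D (Y z) (v, u))"
      unfolding R using gibbs_Yh[OF fg nc uv z] YY uv by simp
  qed
  show ?thesis by (rule exI[of _ Y]) (intro conjI h1 h2 h3)
qed


end
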